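(* Let $q\ge 2$ and $m\ge 1$ be integers. Let $N^{\rm coord}_q(m)$ be the smallest natural number $N$ such that for every $n>N$ there is no A-primitive partition of ${\bf Z}_q^n$ into $q^m$ subcubes of dimension $n-m$, and let $c^{\rm coord*}_q(n,m)$ be the number of different unordered A-primitive partitions of ${\bf Z}_q^n$ into $q^m$ subcubes of dimension $n-m$. Then $$N^{\rm coord}_q(m)=\frac{q^m-1}{q-1}\quad\text{and}\quad c^{\rm coord*}_q\!\left(\frac{q^m-1}{q-1},m\right)=\left(\frac{q^m-1}{q-1}\right)!.$$
   Context: A $d$-dimensional subcube of ${\bf Z}_q^n$ is a subset obtained by fixing the values of some $n-d$ coordinates and letting each remaining coordinate run through all of ${\bf Z}_q$. A partition into subcubes is a collection of subcubes such that each vector of ${\bf Z}_q^n$ lies in exactly one of them. A partition into subcubes is A-primitive if every coordinate $i\in\{1,\dots,n\}$ is fixed in at least one subcube of the partition. It is known (from earlier work) that the number $N^{\rm coord}_q(m)$ exists, i.e. for each $m$ there is some $N$ beyond which no such A-primitive partitions exist. *)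

theory Defs
  imports Main
begin

text \<open>A subcube is given by a pattern: a list of length n over nat option, where
Some v (v < q) means the coordinate is fixed to v and None means it is free.\<close>

definition Zq_vecs :: "nat \<Rightarrow> nat \<Rightarrow> nat list set" where
  "Zq_vecs q n = {x. length x = n \<and> (\<forall>i<n. x ! i < q)}"

definition is_subcube_pat :: "nat \<Rightarrow> nat \<Rightarrow> nat option list \<Rightarrow> bool" where
  "is_subcube_pat q n p \<longleftrightarrow> length p = n \<and> (\<forall>i<n. \<forall>v. p ! i = Some v \<longrightarrow> v < q)"

definition cube_dim :: "nat option list \<Rightarrow> nat" where
  "cube_dim p = card {i. i < length p \<and> p ! i = None}"

definition cube_set :: "nat \<Rightarrow> nat option list \<Rightarrow> nat list set" where
  "cube_set q p = {x \<in> Zq_vecs q (length p). \<forall>i<length p. \<forall>v. p ! i = Some v \<longrightarrow> x ! i = v}"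

text \<open>An A-primitive partition of Z_q^n into q^m subcubes of dimension n - m
(requires m \<le> n, enforced by d + m = n).\<close>
definition aprim_partition :: "nat \<Rightarrow> nat \<Rightarrow> nat \<Rightarrow> nat option list set \<Rightarrow> bool" where
  "aprim_partition q n m P \<longleftrightarrow>
     (\<forall>p\<in>P. is_subcube_pat q n p \<and> cube_dim p + m = n) \<and>
     card P = q ^ m \<and>
     (\<forall>x\<in>Zq_vecs q n. \<exists>!p. p \<in> P \<and> x \<in> cube_set q p) \<and>
     (\<forall>i<n. \<exists>p\<in>P. p ! i \<noteq> None)"

definition N_coord :: "nat \<Rightarrow> nat \<Rightarrow> nat" where
  "N_coord q m = (LEAST N. \<forall>n>N. \<not> (\<exists>P. aprim_partition q n m P))"

definition c_coord_star :: "nat \<Rightarrow> nat \<Rightarrow> nat \<Rightarrow> nat" where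
  "c_coord_star q n m = card {P. aprim_partition q n m P}"

end

theory Submission
  imports Defs "HOL-Combinatorics.Permutations"
begin


definition ispart :: "nat \<Rightarrow> nat \<Rightarrow> nat option list set \<Rightarrow> bool" where
  "ispart q n P \<longleftrightarrow> (\<forall>p\<in>P. is_subcube_pat q n p) \<and>
     (\<forall>x\<in>Zq_vecs q n. \<exists>!p. p \<in> P \<and> x \<in> cube_set q p)"

definition used :: "nat \<Rightarrow> nat option list set \<Rightarrow> nat set" where
  "used n P = {i. i < n \<and> (\<exists>p\<in>P. p ! i \<noteq> None)}"

definition ptof :: "nat option list \<Rightarrow> nat list" where
  "ptof p = map (\<lambda>z. case z of None \<Rightarrow> 0 | Some v \<Rightarrow> v) p"

lemma mem_cube:
  "x \<in> cube_set q p \<longleftrightarrow> length x = length p \<and> (\<forall>i<length p. x!i < q) \<and>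
     (\<forall>i<length p. \<forall>v. p!i = Some v \<longrightarrow> x!i = v)"
  unfolding cube_set_def Zq_vecs_def by auto

lemma mem_Zq: "x \<in> Zq_vecs q n \<longleftrightarrow> length x = n \<and> (\<forall>i<n. x!i < q)"
  unfolding Zq_vecs_def by auto

lemma cube_sub_Zq: "x \<in> cube_set q p \<Longrightarrow> x \<in> Zq_vecs q (length p)"
  unfolding cube_set_def by auto

lemma ptof_in:
  assumes "is_subcube_pat q n p" "0 < q"
  shows "ptof p \<in> cube_set q p"
  using assms unfolding mem_cube ptof_def is_subcube_pat_def
  by (auto split: option.splits)

lemma upd_in:
  assumes "x \<in> cube_set q p" "c < q" "p!i = None \<or> p!i = Some c"
  shows "x[i:=c] \<in> cube_set q p"
  unfolding mem_cube
proof (intro conjI allI impI)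
  show "length (x[i:=c]) = length p" using assms(1) unfolding mem_cube by simp
  fix j assume j: "j < length p"
  show "x[i:=c] ! j < q" using assms j unfolding mem_cube by (cases "j = i") auto
  fix v assume "p ! j = Some v"
  then show "x[i:=c] ! j = v" using assms j unfolding mem_cube by (cases "j = i") auto
qed

lemma cube_upd_None1:
  assumes "x \<in> cube_set q p"
  shows "x \<in> cube_set q (p[i:=None])"
  unfolding mem_cube
proof (intro conjI allI impI)
  show "length x = length (p[i:=None])" using assms(1) unfolding mem_cube by simp
  fix j assume j: "j < length (p[i:=None])"
  show "x ! j < q" using assms j unfolding mem_cube by auto
  fix v assume "p[i:=None] ! j = Some v"
  then show "x ! j = v" using assms j unfolding mem_cube by (cases "j = i") auto
qed

lemma cube_upd_None2:
  assumes "x \<in> cube_set q (p[i:=None])" "c < q" "p!i = None \<or> p!i = Some c"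
  shows "x[i:=c] \<in> cube_set q p"
  unfolding mem_cube
proof (intro conjI allI impI)
  show "length (x[i:=c]) = length p" using assms(1) unfolding mem_cube by simp
  fix j assume j: "j < length p"
  show "x[i:=c] ! j < q" using assms j unfolding mem_cube by (cases "j = i") auto
  fix v assume "p ! j = Some v"
  then show "x[i:=c] ! j = v" using assms j unfolding mem_cube by (cases "j = i") auto
qed

lemma cube_upd_Some:
  assumes "x \<in> cube_set q (p[i:=Some c])" "b < q" "p!i = None \<or> p!i = Some b" "i < length p"
  shows "x[i:=b] \<in> cube_set q p"
  unfolding mem_cube
proof (intro conjI allI impI)
  show "length (x[i:=b]) = length p" using assms(1) unfolding mem_cube by simp
  fix j assume j: "j < length p"
  show "x[i:=b] ! j < q" using assms j unfolding mem_cube by (cases "j = i") auto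
  fix v assume "p ! j = Some v"
  then show "x[i:=b] ! j = v" using assms j unfolding mem_cube by (cases "j = i") auto
qed

lemma finite_pats: "finite {p. is_subcube_pat q n p}"
proof -
  have "{p. is_subcube_pat q n p} \<subseteq> {xs. set xs \<subseteq> insert None (Some ` {..<q}) \<and> length xs = n}"
    unfolding is_subcube_pat_def
    by (auto simp: in_set_conv_nth) (metis lessThan_iff not_None_eq rev_image_eqI)
  moreover have "finite {xs. set xs \<subseteq> insert None (Some ` {..<q}) \<and> length xs = n}"
    by (rule finite_lists_length_eq) auto
  ultimately show ?thesis by (rule finite_subset)
qed

lemma ispart_finite: "ispart q n P \<Longrightarrow> finite P"
  unfolding ispart_def using finite_pats by (metis finite_subset mem_Collect_eq subsetI)

lemma ispart_valid: "ispart q n P \<Longrightarrow> p \<in> P \<Longrightarrow> is_subcube_pat q n p"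
  unfolding ispart_def by auto

lemma ispart_len: "ispart q n P \<Longrightarrow> p \<in> P \<Longrightarrow> length p = n"
  unfolding ispart_def is_subcube_pat_def by auto

lemma ispart_uniq:
  "ispart q n P \<Longrightarrow> p1 \<in> P \<Longrightarrow> p2 \<in> P \<Longrightarrow> x \<in> cube_set q p1 \<Longrightarrow> x \<in> cube_set q p2 \<Longrightarrow> p1 = p2"
  unfolding ispart_def
  by (metis cube_sub_Zq is_subcube_pat_def)

lemma ispart_cover:
  "ispart q n P \<Longrightarrow> x \<in> Zq_vecs q n \<Longrightarrow> \<exists>p\<in>P. x \<in> cube_set q p"
  unfolding ispart_def by blast

lemma subcube_incl:
  assumes "is_subcube_pat q n p" "2 \<le> q" "cube_set q p \<subseteq> cube_set q p'" "k < n" "p'!k = Some v"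
    "length p' = n"
  shows "p!k = Some v"
proof -
  have x0: "ptof p \<in> cube_set q p" using ptof_in assms by auto
  show ?thesis
  proof (cases "p!k")
    case None
    define c where "c = (if v = 0 then 1 else 0::nat)"
    have "c < q" "c \<noteq> v" using assms(2) unfolding c_def by auto
    then have "(ptof p)[k:=c] \<in> cube_set q p" using upd_in[OF x0] None by auto
    then have "(ptof p)[k:=c] \<in> cube_set q p'" using assms by auto
    then have "(ptof p)[k:=c] ! k = v" using assms unfolding mem_cube by auto
    moreover have "length (ptof p) = n" using assms unfolding ptof_def is_subcube_pat_def by auto
    ultimately show ?thesis using \<open>c \<noteq> v\<close> assms by simp
  next
    case (Some w)
    have "ptof p \<in> cube_set q p'" using x0 assms by auto
    then have "ptof p ! k = v" using assms unfolding mem_cube by auto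
    moreover have "ptof p ! k = w" using Some assms unfolding ptof_def is_subcube_pat_def by auto
    ultimately show ?thesis using Some by simp
  qed
qed



lemma nth_upd: "j < length xs \<Longrightarrow> xs[i:=x]!j = (if i = j then x else xs!j)"
  by (cases "i < length xs") (auto simp: nth_list_update)

lemma valid_upd_None: "is_subcube_pat q n p \<Longrightarrow> is_subcube_pat q n (p[i:=None])"
  unfolding is_subcube_pat_def by (auto simp: nth_upd)

lemma valid_upd_Some: "is_subcube_pat q n p \<Longrightarrow> c < q \<Longrightarrow> is_subcube_pat q n (p[i:=Some c])"
  unfolding is_subcube_pat_def by (auto simp: nth_upd)

lemma upd_self: "i < length x \<Longrightarrow> (x[i:=a])[i := x!i] = x"
  by simp

lemma reduce_part:
  assumes P: "ispart q n P" and a: "a < q" and i: "i < n"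
  shows "ispart q n ((\<lambda>p. p[i:=None]) ` {p\<in>P. p!i = None \<or> p!i = Some a})"
  unfolding ispart_def
proof (intro conjI ballI)
  fix p' assume "p' \<in> (\<lambda>p. p[i:=None]) ` {p\<in>P. p!i = None \<or> p!i = Some a}"
  then show "is_subcube_pat q n p'" using P valid_upd_None ispart_valid by blast
next
  fix x assume x: "x \<in> Zq_vecs q n"
  then have xa: "x[i:=a] \<in> Zq_vecs q n" using a unfolding mem_Zq by (auto simp: nth_upd)
  obtain p where p: "p \<in> P" "x[i:=a] \<in> cube_set q p" using ispart_cover[OF P xa] by blast
  have lp: "length p = n" using ispart_len[OF P p(1)] .
  have lx: "length x = n" using x unfolding mem_Zq by simp
  have pi: "p!i = None \<or> p!i = Some a"
  proof (cases "p!i")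
    case (Some v)
    then have "x[i:=a] ! i = v" using p(2) lp i unfolding mem_cube by auto
    then show ?thesis using Some lx i by simp
  qed simp
  have "x[i:=a] \<in> cube_set q (p[i:=None])" using cube_upd_None1[OF p(2)] .
  moreover have "(p[i:=None]) ! i = None" using lp i by simp
  moreover have "x!i < q" using x i unfolding mem_Zq by auto
  ultimately have "(x[i:=a])[i:=x!i] \<in> cube_set q (p[i:=None])"
    using upd_in by blast
  then have xin: "x \<in> cube_set q (p[i:=None])" using lx i by simp
  show "\<exists>!p'. p' \<in> (\<lambda>p. p[i:=None]) ` {p\<in>P. p!i = None \<or> p!i = Some a} \<and> x \<in> cube_set q p'"
  proof (rule ex1I[of _ "p[i:=None]"])
    show "p[i:=None] \<in> (\<lambda>p. p[i:=None]) ` {p\<in>P. p!i = None \<or> p!i = Some a} \<and> x \<in> cube_set q (p[i:=None])"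
      using p pi xin by blast
  next
    fix p' assume "p' \<in> (\<lambda>p. p[i:=None]) ` {p\<in>P. p!i = None \<or> p!i = Some a} \<and> x \<in> cube_set q p'"
    then obtain p2 where p2: "p2 \<in> P" "p2!i = None \<or> p2!i = Some a" "p' = p2[i:=None]"
      "x \<in> cube_set q (p2[i:=None])" by blast
    have "x[i:=a] \<in> cube_set q p2" using cube_upd_None2[OF p2(4) a p2(2)] .
    then have "p2 = p" using ispart_uniq[OF P p2(1) p(1)] p(2) by blast
    then show "p' = p[i:=None]" using p2 by simp
  qed
qed

lemma exists_value:
  assumes P: "ispart q n P" and p: "p \<in> P" "p!i = Some b0" and i: "i < n" and b: "b < q"
  shows "\<exists>p'\<in>P. p'!i = Some b"
proof -
  have v: "is_subcube_pat q n p" using ispart_valid[OF P p(1)] .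
  have x: "ptof p \<in> cube_set q p" using ptof_in[OF v] b by simp
  have lx: "length (ptof p) = n" using v unfolding ptof_def is_subcube_pat_def by simp
  have "(ptof p)[i:=b] \<in> Zq_vecs q n"
    using x lx b v cube_sub_Zq unfolding mem_Zq is_subcube_pat_def by (auto simp: nth_upd)
  then obtain p' where p': "p' \<in> P" "(ptof p)[i:=b] \<in> cube_set q p'" using ispart_cover[OF P] by blast
  have lp': "length p' = n" using ispart_len[OF P p'(1)] .
  show ?thesis
  proof (cases "p'!i")
    case None
    have "ptof p ! i < q" using x lx i unfolding mem_cube by auto
    then have "((ptof p)[i:=b])[i:=ptof p ! i] \<in> cube_set q p'" using upd_in[OF p'(2)] None by blast
    then have "ptof p \<in> cube_set q p'" using lx i by simp
    then have "p' = p" using ispart_uniq[OF P p'(1) p(1)] x by blast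
    then show ?thesis using None p by simp
  next
    case (Some v)
    then have "(ptof p)[i:=b] ! i = v" using p'(2) lp' i unfolding mem_cube by auto
    then show ?thesis using Some lx i p' by auto
  qed
qed

lemma Zq_nonempty: "replicate n 0 \<in> Zq_vecs q n" if "0 < q"
  using that unfolding mem_Zq by simp

lemma ispart_nonempty: "ispart q n P \<Longrightarrow> 0 < q \<Longrightarrow> P \<noteq> {}"
  using ispart_cover Zq_nonempty by blast



lemma card_less_minus: "a < (q::nat) \<Longrightarrow> card {b. b < q \<and> b \<noteq> a} = q - 1"
proof -
  assume a: "a < q"
  have "{b. b < q \<and> b \<noteq> a} = {..<q} - {a}" by auto
  then show ?thesis using a by simp
qed

theorem LT:
  assumes q: "2 \<le> q"
  shows "ispart q n P \<Longrightarrow> 1 + (q-1) * card (used n P) \<le> card P \<and>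
    (card P = 1 + (q-1) * card (used n P) \<longrightarrow> used n P \<noteq> {} \<longrightarrow>
      (\<exists>r\<in>used n P. \<forall>p\<in>P. p!r \<noteq> None))"
proof (induction "card P" arbitrary: P rule: less_induct)
  case less
  note P = less.prems
  define J where "J = used n P"
  have finP: "finite P" using ispart_finite[OF P] .
  have finJ: "finite J" unfolding J_def used_def by auto
  show ?case
  proof (cases "J = {}")
    case True
    have "P \<noteq> {}" using ispart_nonempty[OF P] q by simp
    then have "1 \<le> card P" using finP by (simp add: Suc_leI card_gt_0_iff)
    then show ?thesis using True unfolding J_def by simp
  next
    case False
    define N where "N j = card {p\<in>P. p!j \<noteq> None}" for j
    obtain i where i: "i \<in> J" "\<forall>j\<in>J. N i \<le> N j"
      using ex_has_least_nat[of "\<lambda>j. j \<in> J" _ N] False by blast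
    have iN: "i < n" using i unfolding J_def used_def by auto
    obtain p0 b0 where p0: "p0 \<in> P" "p0!i = Some b0"
      using i unfolding J_def used_def by auto
    have Bne: "\<exists>p\<in>P. p!i = Some b" if "b < q" for b
      using exists_value[OF P p0 iN that] .
    have vals: "v < q" if "p \<in> P" "p!i = Some v" for p v
      using ispart_valid[OF P that(1)] that iN unfolding is_subcube_pat_def by auto
    define S where "S a = {p\<in>P. p!i = None \<or> p!i = Some a}" for a
    define P' where "P' a = (\<lambda>p. p[i:=None]) ` S a" for a
    define X where "X a = {p\<in>P. p!i \<noteq> None \<and> p!i \<noteq> Some a}" for a
    have part': "ispart q n (P' a)" if "a < q" for a
      unfolding P'_def S_def using reduce_part[OF P that iN] .
    have used': "used n (P' a) = J - {i}" if a: "a < q" for a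
    proof
      show "used n (P' a) \<subseteq> J - {i}"
      proof
        fix k assume "k \<in> used n (P' a)"
        then obtain p where p: "p \<in> S a" "k < n" "(p[i:=None]) ! k \<noteq> None"
          unfolding used_def P'_def by auto
        have lp: "length p = n" using p(1) ispart_len[OF P] unfolding S_def by auto
        have "k \<noteq> i" "p!k \<noteq> None" using p lp by (auto simp: nth_upd split: if_splits)
        then show "k \<in> J - {i}" using p unfolding J_def used_def S_def by auto
      qed
    next
      show "J - {i} \<subseteq> used n (P' a)"
      proof
        fix k assume k: "k \<in> J - {i}"
        have kn: "k < n" using k unfolding J_def used_def by auto
        show "k \<in> used n (P' a)"
        proof (rule ccontr)
          assume nk: "k \<notin> used n (P' a)"
          have none: "p!k = None" if "p \<in> S a" for p
          proof -
            have lp: "length p = n" using that ispart_len[OF P] unfolding S_def by auto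
            have "(p[i:=None]) ! k = None" using nk that kn unfolding used_def P'_def by auto
            then show ?thesis using k lp kn by (auto simp: nth_upd)
          qed
          have sub1: "{p\<in>P. p!k \<noteq> None} \<subseteq> X a"
          proof
            fix p assume p: "p \<in> {p\<in>P. p!k \<noteq> None}"
            then have "p \<notin> S a" using none by auto
            then show "p \<in> X a" using p unfolding S_def X_def by auto
          qed
          obtain pa where pa: "pa \<in> P" "pa!i = Some a" using Bne a by blast
          have sub2: "X a \<subset> {p\<in>P. p!i \<noteq> None}"
            using pa unfolding X_def by auto
          have "N k \<le> card (X a)" unfolding N_def
            using sub1 finP by (intro card_mono) (auto simp: X_def)
          also have "\<dots> < N i" unfolding N_def
            using sub2 finP by (intro psubset_card_mono) auto
          finally show False using i k by force
        qed
      qed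
    qed
    have cardSX: "card (P' a) + card (X a) \<le> card P" for a
    proof -
      have "finite (S a)" using finP unfolding S_def by simp
      then have "card (P' a) \<le> card (S a)" unfolding P'_def by (rule card_image_le)
      moreover have "S a \<union> X a = P" "S a \<inter> X a = {}" unfolding S_def X_def by auto
      then have "card (S a) + card (X a) = card P"
        using finP by (metis card_Un_disjoint finite_Un)
      ultimately show ?thesis by simp
    qed
    define f :: "nat option list \<Rightarrow> nat" where "f p = the (p!i)" for p
    have imgX: "f ` X a = {b. b < q \<and> b \<noteq> a}" if "a < q" for a
    proof
      show "f ` X a \<subseteq> {b. b < q \<and> b \<noteq> a}"
      proof
        fix b assume "b \<in> f ` X a"
        then obtain p where p: "p \<in> X a" "b = f p" by auto
        then obtain v where v: "p!i = Some v" unfolding X_def by auto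
        then show "b \<in> {b. b < q \<and> b \<noteq> a}" using p vals[of p v] unfolding f_def X_def by auto
      qed
    next
      show "{b. b < q \<and> b \<noteq> a} \<subseteq> f ` X a"
      proof
        fix b assume b: "b \<in> {b. b < q \<and> b \<noteq> a}"
        then obtain p where p: "p \<in> P" "p!i = Some b" using Bne by blast
        then have "p \<in> X a" "f p = b" using b unfolding X_def f_def by auto
        then show "b \<in> f ` X a" by force
      qed
    qed
    have finX: "finite (X a)" for a using finP unfolding X_def by auto
    have cardX: "q - 1 \<le> card (X a)" if "a < q" for a
    proof -
      have "q - 1 = card (f ` X a)" using imgX[OF that] card_less_minus[OF that] by simp
      also have "\<dots> \<le> card (X a)" using card_image_le finX by blast
      finally show ?thesis .
    qed
    have lessP: "card (P' a) < card P" if "a < q" for a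
      using cardSX[of a] cardX[OF that] q by linarith
    have IH: "1 + (q-1) * card (J - {i}) \<le> card (P' a) \<and>
      (card (P' a) = 1 + (q-1) * card (J - {i}) \<longrightarrow> J - {i} \<noteq> {} \<longrightarrow>
      (\<exists>r\<in>J - {i}. \<forall>p\<in>P' a. p!r \<noteq> None))" if "a < q" for a
      using less.hyps[OF lessP[OF that] part'[OF that]] used'[OF that] by simp
    have cJ: "card J = Suc (card (J - {i}))" using i(1) finJ
      by (metis card_Suc_Diff1)
    have arith: "(q-1) * card J = (q-1) * card (J - {i}) + (q-1)" using cJ by simp
    have bound: "1 + (q-1) * card J \<le> card P"
      using IH[of 0] cardSX[of 0] cardX[of 0] q arith by linarith
    have tight: "card (X a) = q - 1 \<and> card (P' a) = 1 + (q-1) * card (J - {i})"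
      if t: "card P = 1 + (q-1) * card J" and a: "a < q" for a
      using IH[OF a] cardSX[of a] cardX[OF a] t arith by linarith
    have single: "p1 = p2" if t: "card P = 1 + (q-1) * card J" and a: "a < q" and b: "b \<noteq> a"
      and p: "p1 \<in> P" "p2 \<in> P" "p1!i = Some b" "p2!i = Some b" for a b p1 p2
    proof -
      have "card (f ` X a) = card (X a)"
        using tight[OF t a] imgX[OF a] card_less_minus[OF a] by simp
      then have "inj_on f (X a)" using finX by (simp add: inj_on_iff_eq_card)
      moreover have "p1 \<in> X a" "p2 \<in> X a" using p b unfolding X_def by auto
      moreover have "f p1 = f p2" using p unfolding f_def by simp
      ultimately show ?thesis by (meson inj_onD)
    qed
    have root: "\<exists>r\<in>J. \<forall>p\<in>P. p!r \<noteq> None" if t: "card P = 1 + (q-1) * card J"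
    proof -
      have single_all: "p1 = p2" if "b < q" "p1 \<in> P" "p2 \<in> P" "p1!i = Some b" "p2!i = Some b"
        for b p1 p2
      proof (cases "b = 0")
        case True
        then show ?thesis using single[OF t _ _ that(2-5), of 1] q by simp
      next
        case False
        then show ?thesis using single[OF t _ False that(2-5)] q by simp
      qed
      show ?thesis
      proof (cases "J - {i} = {}")
        case True
        have "\<forall>p\<in>P. p!i \<noteq> None"
        proof (rule ccontr)
          assume "\<not> (\<forall>p\<in>P. p!i \<noteq> None)"
          then obtain p where p: "p \<in> P" "p!i = None" by auto
          have lp: "length p = n" using ispart_len[OF P p(1)] .
          have "p[i:=None] = p" using p by (metis list_update_id)
          then have pP': "p \<in> P' 0" using p unfolding P'_def S_def by force
          have allN: "p!k = None" if "k < n" for k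
            using used'[of 0] True q pP' that unfolding used_def by auto
          obtain p1 where p1: "p1 \<in> P" "p1!i = Some 0" using Bne q by force
          have v1: "is_subcube_pat q n p1" using ispart_valid[OF P p1(1)] .
          have x: "ptof p1 \<in> cube_set q p1" using ptof_in[OF v1] q by simp
          have "ptof p1 \<in> cube_set q p" using x allN lp v1
            unfolding mem_cube is_subcube_pat_def by auto
          then have "p = p1" using ispart_uniq[OF P p(1) p1(1)] x by blast
          then show False using p p1 by simp
        qed
        then show ?thesis using i(1) by blast
      next
        case False
        obtain r where r: "r \<in> J - {i}" "\<forall>p'\<in>P' 0. p'!r \<noteq> None"
          using IH[of 0] tight[OF t, of 0] q False by auto
        have rn: "r < n" using r unfolding J_def used_def by auto
        have inS: "p!r \<noteq> None" if "p \<in> S 0" for p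
        proof -
          have "p[i:=None] \<in> P' 0" using that unfolding P'_def by auto
          then have "(p[i:=None])!r \<noteq> None" using r by blast
          moreover have "length p = n" using that ispart_len[OF P] unfolding S_def by auto
          ultimately show ?thesis using r rn by (auto simp: nth_upd split: if_splits)
        qed
        have "\<forall>p\<in>P. p!r \<noteq> None"
        proof
          fix p assume pP: "p \<in> P"
          show "p!r \<noteq> None"
          proof (cases "p \<in> S 0")
            case True
            then show ?thesis using inS by blast
          next
            case False
            then obtain b where b: "p!i = Some b" "b \<noteq> 0" using pP unfolding S_def by auto
            have bq: "b < q" using vals[OF pP b(1)] .
            have lp: "length p = n" using ispart_len[OF P pP] .
            obtain p1 where p1: "p1 \<in> P" "p1!i = Some 0" using Bne q by force
            have incl: "cube_set q (p[i:=Some 0]) \<subseteq> cube_set q p1"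
            proof
              fix x assume x: "x \<in> cube_set q (p[i:=Some 0])"
              have lx: "length x = n" using x lp unfolding mem_cube by simp
              have xi: "x!i = 0" using x lp iN unfolding mem_cube by auto
              have xZ: "x \<in> Zq_vecs q n" using cube_sub_Zq[OF x] lp by simp
              have xb: "x[i:=b] \<in> cube_set q p" using cube_upd_Some[OF x bq] b lp iN by simp
              obtain p'' where p'': "p'' \<in> P" "x \<in> cube_set q p''" using ispart_cover[OF P xZ] by blast
              have lp'': "length p'' = n" using ispart_len[OF P p''(1)] .
              show "x \<in> cube_set q p1"
              proof (cases "p''!i")
                case None
                then have "x[i:=b] \<in> cube_set q p''" using upd_in[OF p''(2) bq] by simp
                then have "p'' = p" using ispart_uniq[OF P p''(1) pP] xb by blast
                then show ?thesis using None b by simp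
              next
                case (Some c)
                then have "c = 0" using p''(2) xi lp'' iN unfolding mem_cube by auto
                then have "p'' = p1" using single_all[of 0 p'' p1] p'' p1 Some q by simp
                then show ?thesis using p'' by simp
              qed
            qed
            have "p1 \<in> S 0" using p1 unfolding S_def by simp
            then obtain v where v: "p1!r = Some v" using inS by blast
            have "is_subcube_pat q n (p[i:=Some 0])"
              using valid_upd_Some ispart_valid[OF P pP] q by simp
            then have "(p[i:=Some 0])!r = Some v"
              using subcube_incl[OF _ q incl rn v] ispart_len[OF P p1(1)] by blast
            then show ?thesis using r lp rn by (auto simp: nth_upd split: if_splits)
          qed
        qed
        then show ?thesis using r by blast
      qed
    qed
    show ?thesis using bound root unfolding J_def by blast
  qed
qed



definition Nodes :: "nat \<Rightarrow> nat \<Rightarrow> nat list set" where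
  "Nodes q m = {u. length u < m \<and> set u \<subseteq> {..<q}}"

definition Leaves :: "nat \<Rightarrow> nat \<Rightarrow> nat list set" where
  "Leaves q m = {w. length w = m \<and> set w \<subseteq> {..<q}}"

definition ppre :: "nat list \<Rightarrow> nat list \<Rightarrow> bool" where
  "ppre u w \<longleftrightarrow> length u < length w \<and> take (length u) w = u"

definition pat :: "nat \<Rightarrow> nat set \<Rightarrow> (nat \<Rightarrow> nat list) \<Rightarrow> nat list \<Rightarrow> nat option list" where
  "pat n J g w = map (\<lambda>j. if j \<in> J \<and> ppre (g j) w then Some (w ! length (g j)) else None) [0..<n]"

definition part :: "nat \<Rightarrow> nat \<Rightarrow> nat set \<Rightarrow> (nat \<Rightarrow> nat list) \<Rightarrow> nat \<Rightarrow> nat option list set" where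
  "part q n J g m = pat n J g ` Leaves q m"

fun nn :: "nat \<Rightarrow> nat \<Rightarrow> nat" where
  "nn q 0 = 0"
| "nn q (Suc m) = 1 + q * nn q m"

lemma ppre_Nil[simp]: "ppre [] (c#w)"
  unfolding ppre_def by simp

lemma ppre_Cons[simp]: "ppre (a#v) (c#w) \<longleftrightarrow> a = c \<and> ppre v w"
  unfolding ppre_def by auto

lemma Leaves_Suc: "w \<in> Leaves q (Suc m) \<longleftrightarrow> (\<exists>c w'. w = c#w' \<and> c < q \<and> w' \<in> Leaves q m)"
  unfolding Leaves_def by (cases w) auto

lemma Nodes_Suc: "u \<in> Nodes q (Suc m) \<longleftrightarrow> u = [] \<or> (\<exists>c v. u = c#v \<and> c < q \<and> v \<in> Nodes q m)"
  unfolding Nodes_def by (cases u) auto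

lemma length_pat[simp]: "length (pat n J g w) = n"
  unfolding pat_def by simp

lemma nth_pat: "j < n \<Longrightarrow> pat n J g w ! j = (if j \<in> J \<and> ppre (g j) w then Some (w ! length (g j)) else None)"
  unfolding pat_def by simp

lemma cube_dim_full:
  assumes "cube_dim p = length p" "k < length p"
  shows "p!k = None"
proof -
  have "{i. i < length p \<and> p!i = None} \<subseteq> {..<length p}" by auto
  moreover have "card {i. i < length p \<and> p!i = None} = card {..<length p}" using assms(1)
    unfolding cube_dim_def by simp
  ultimately have "{i. i < length p \<and> p!i = None} = {..<length p}"
    by (metis card_subset_eq finite_lessThan)
  then show ?thesis using assms(2) by auto
qed

lemma cube_dim_upd:
  assumes "r < length p" "p!r \<noteq> None"
  shows "cube_dim (p[r:=None]) = Suc (cube_dim p)"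
proof -
  have "{i. i < length (p[r:=None]) \<and> p[r:=None]!i = None} = insert r {i. i < length p \<and> p!i = None}"
    using assms by (auto simp: nth_upd)
  moreover have "r \<notin> {i. i < length p \<and> p!i = None}" using assms by auto
  ultimately show ?thesis unfolding cube_dim_def by simp
qed

lemma card_UN_eq_disj:
  assumes "finite I" "\<forall>i\<in>I. finite (A i)" "card (\<Union>i\<in>I. A i) = (\<Sum>i\<in>I. card (A i))"
    "i \<in> I" "j \<in> I" "i \<noteq> j"
  shows "A i \<inter> A j = {}"
proof -
  have U: "(\<Union>i\<in>I. A i) = A i \<union> (\<Union>k\<in>I-{i}. A k)" using assms(4) by auto
  have S: "(\<Sum>k\<in>I. card (A k)) = card (A i) + (\<Sum>k\<in>I-{i}. card (A k))"
    using assms(1,4) by (simp add: sum.remove)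
  have le: "card (\<Union>k\<in>I-{i}. A k) \<le> (\<Sum>k\<in>I-{i}. card (A k))"
    using assms(1) by (simp add: card_UN_le)
  have fin: "finite (\<Union>k\<in>I-{i}. A k)" "finite (A i)" using assms(1,2,4) by auto
  have "card (A i) + card (\<Union>k\<in>I-{i}. A k) = card (A i \<union> (\<Union>k\<in>I-{i}. A k)) + card (A i \<inter> (\<Union>k\<in>I-{i}. A k))"
    using card_Un_Int fin by blast
  moreover have "card (A i \<union> (\<Union>k\<in>I-{i}. A k)) = (\<Sum>k\<in>I. card (A k))"
    using U assms(3) by simp
  ultimately have "card (A i \<inter> (\<Union>k\<in>I-{i}. A k)) = 0" using S le by linarith
  then have "A i \<inter> (\<Union>k\<in>I-{i}. A k) = {}" using fin by simp
  then show ?thesis using assms(5,6) by auto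
qed



theorem struct:
  assumes q: "2 \<le> q"
  shows "ispart q n P \<Longrightarrow> (\<forall>p\<in>P. cube_dim p + m = n) \<Longrightarrow>
    card P = 1 + (q-1) * card (used n P) \<Longrightarrow>
    card (used n P) = nn q m \<and> (\<exists>g. bij_betw g (used n P) (Nodes q m) \<and> P = part q n (used n P) g m)"
proof (induction m arbitrary: P)
  case 0
  note P = "0.prems"(1)
  have allN: "p = replicate n None" if "p \<in> P" for p
  proof -
    have lp: "length p = n" using ispart_len[OF P that] .
    have "cube_dim p = length p" using "0.prems"(2) that lp by simp
    then show ?thesis using cube_dim_full lp by (metis nth_equalityI length_replicate nth_replicate)
  qed
  have "P \<noteq> {}" using ispart_nonempty[OF P] q by simp
  then have PP: "P = {replicate n None}" using allN by blast
  have U: "used n P = {}" unfolding used_def PP by auto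
  have N0: "Nodes q 0 = {}" unfolding Nodes_def by simp
  have L0: "Leaves q 0 = {[]}" unfolding Leaves_def by auto
  have pp: "part q n {} (\<lambda>_. []) 0 = {replicate n None}"
    unfolding part_def L0 pat_def by (simp add: map_replicate_const)
  have "bij_betw (\<lambda>_. []) (used n P) (Nodes q 0) \<and> P = part q n (used n P) (\<lambda>_. []) 0"
    using U N0 PP pp by (simp add: bij_betw_def)
  then show ?case using U by auto
next
  case (Suc m)
  note P = Suc.prems(1)
  define J where "J = used n P"
  have finP: "finite P" using ispart_finite[OF P] .
  have finJ: "finite J" unfolding J_def used_def by auto
  have tight: "card P = 1 + (q-1) * card J" using Suc.prems(3) unfolding J_def .
  have Jne: "J \<noteq> {}"
  proof -
    obtain p where p: "p \<in> P" using ispart_nonempty[OF P] q by auto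
    have lp: "length p = n" using ispart_len[OF P p] .
    have "cube_dim p \<noteq> length p" using Suc.prems(2) p lp by auto
    moreover have "cube_dim p = length p" if "\<forall>k<n. p!k = None"
    proof -
      have "{i. i < length p \<and> p!i = None} = {..<length p}" using that lp by auto
      then show ?thesis unfolding cube_dim_def by simp
    qed
    ultimately obtain k where "k < n" "p!k \<noteq> None" by blast
    then show ?thesis using p unfolding J_def used_def by auto
  qed
  obtain r where r: "r \<in> J" "\<forall>p\<in>P. p!r \<noteq> None"
    using LT[OF q P] tight Jne unfolding J_def by blast
  have rn: "r < n" using r unfolding J_def used_def by auto
  have vals: "v < q" if "p \<in> P" "p!r = Some v" for p v
    using ispart_valid[OF P that(1)] that rn unfolding is_subcube_pat_def by auto
  define B where "B c = {p\<in>P. p!r = Some c}" for c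
  define Pc where "Pc c = (\<lambda>p. p[r:=None]) ` B c" for c
  define U where "U c = used n (Pc c)" for c
  have BS: "B c = {p\<in>P. p!r = None \<or> p!r = Some c}" for c
    using r unfolding B_def by auto
  have partc: "ispart q n (Pc c)" if "c < q" for c
    unfolding Pc_def BS using reduce_part[OF P that rn] .
  have dimc: "\<forall>p\<in>Pc c. cube_dim p + m = n" for c
  proof
    fix p' assume "p' \<in> Pc c"
    then obtain p where p: "p \<in> P" "p!r = Some c" "p' = p[r:=None]" unfolding Pc_def B_def by auto
    have "cube_dim p' = Suc (cube_dim p)" using cube_dim_upd[of r p] p rn ispart_len[OF P p(1)] by simp
    then show "cube_dim p' + m = n" using Suc.prems(2) p(1) by simp
  qed
  have inj: "inj_on (\<lambda>p. p[r:=None]) (B c)" for c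
  proof (rule inj_onI)
    fix p1 p2 assume p: "p1 \<in> B c" "p2 \<in> B c" "p1[r:=None] = p2[r:=None]"
    then have "(p1[r:=None])[r:=Some c] = (p2[r:=None])[r:=Some c]" by simp
    moreover have "p1!r = Some c" "p2!r = Some c" using p unfolding B_def by auto
    ultimately show "p1 = p2" by (metis list_update_id list_update_overwrite)
  qed
  have cardPc: "card (Pc c) = card (B c)" for c unfolding Pc_def using inj card_image by blast
  have finB: "finite (B c)" for c using finP unfolding B_def by simp
  have U_sub: "U c \<subseteq> J - {r}" for c
  proof
    fix k assume "k \<in> U c"
    then obtain p where p: "p \<in> B c" "k < n" "(p[r:=None])!k \<noteq> None" unfolding U_def used_def Pc_def by auto
    have lp: "length p = n" using p(1) ispart_len[OF P] unfolding B_def by auto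
    have "k \<noteq> r" "p!k \<noteq> None" using p lp by (auto simp: nth_upd split: if_splits)
    then show "k \<in> J - {r}" using p unfolding J_def used_def B_def by auto
  qed
  have U_cov: "J - {r} \<subseteq> (\<Union>c\<in>{..<q}. U c)"
  proof
    fix k assume k: "k \<in> J - {r}"
    then obtain p where p: "p \<in> P" "k < n" "p!k \<noteq> None" unfolding J_def used_def by auto
    obtain c where c: "p!r = Some c" using r p by auto
    have cq: "c < q" using vals p c by blast
    have lp: "length p = n" using ispart_len[OF P p(1)] .
    have "p[r:=None] \<in> Pc c" using p c unfolding Pc_def B_def by auto
    moreover have "(p[r:=None])!k \<noteq> None" using p k lp by (auto simp: nth_upd)
    ultimately have "k \<in> U c" using p unfolding U_def used_def by auto
    then show "k \<in> (\<Union>c\<in>{..<q}. U c)" using cq by auto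
  qed
  have U_eq: "(\<Union>c\<in>{..<q}. U c) = J - {r}" using U_sub U_cov by auto
  have finU: "finite (U c)" for c unfolding U_def used_def by auto
  have Punion: "P = (\<Union>c\<in>{..<q}. B c)"
  proof
    show "P \<subseteq> (\<Union>c\<in>{..<q}. B c)"
    proof
      fix p assume p: "p \<in> P"
      then obtain c where "p!r = Some c" using r by auto
      then show "p \<in> (\<Union>c\<in>{..<q}. B c)" using vals p unfolding B_def by auto
    qed
  qed (auto simp: B_def)
  have cardP: "card P = (\<Sum>c<q. card (B c))"
    unfolding Punion by (rule card_UN_disjoint) (auto simp: finP B_def)
  have LTc: "1 + (q-1) * card (U c) \<le> card (B c)" if "c < q" for c
    using LT[OF q partc[OF that]] cardPc unfolding U_def by simp
  have sum1: "(\<Sum>c<q. 1 + (q-1) * card (U c)) = q + (q-1) * (\<Sum>c<q. card (U c))"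
    unfolding sum.distrib sum_distrib_left by simp
  have s_ge: "card (J - {r}) \<le> (\<Sum>c<q. card (U c))"
    using card_UN_le[of "{..<q}" U] U_eq by simp
  have cJ: "card J = Suc (card (J - {r}))" using r(1) finJ by (metis card_Suc_Diff1)
  have A1: "q + (q-1) * (\<Sum>c<q. card (U c)) \<le> card P"
    using cardP sum1 sum_mono[of "{..<q}" "\<lambda>c. 1 + (q-1) * card (U c)" "\<lambda>c. card (B c)"] LTc
    by simp
  have A2: "(q-1) * card J = (q-1) * card (J - {r}) + (q - 1)" using cJ by simp
  have "(q-1) * (\<Sum>c<q. card (U c)) \<le> (q-1) * card (J - {r})"
    using A1 A2 tight q by linarith
  then have sumU: "(\<Sum>c<q. card (U c)) = card (J - {r})" using s_ge q by simp
  have tightc: "card (B c) = 1 + (q-1) * card (U c)" if c: "c < q" for c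
  proof (rule ccontr)
    assume "card (B c) \<noteq> 1 + (q-1) * card (U c)"
    then have "1 + (q-1) * card (U c) < card (B c)" using LTc[OF c] by simp
    then have "(\<Sum>c<q. 1 + (q-1) * card (U c)) < (\<Sum>c<q. card (B c))"
      using LTc c by (intro sum_strict_mono_ex1) auto
    moreover have "(q-1) * (\<Sum>c<q. card (U c)) = (q-1) * card (J - {r})" using sumU by simp
    ultimately show False using sum1 cardP tight A2 q by linarith
  qed
  have IHc: "card (U c) = nn q m \<and> (\<exists>g. bij_betw g (U c) (Nodes q m) \<and> Pc c = part q n (U c) g m)"
    if c: "c < q" for c
    using Suc.IH[OF partc[OF c] dimc] tightc[OF c] cardPc unfolding U_def by simp
  have cardJ: "card J = nn q (Suc m)"
  proof -
    have "(\<Sum>c<q. card (U c)) = q * nn q m" using IHc by simp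
    then show ?thesis using sumU cJ by simp
  qed
  have disj: "U c1 \<inter> U c2 = {}" if "c1 < q" "c2 < q" "c1 \<noteq> c2" for c1 c2
    using card_UN_eq_disj[of "{..<q}" U c1 c2] finU that sumU U_eq by simp
  obtain G where G: "\<forall>c<q. bij_betw (G c) (U c) (Nodes q m) \<and> Pc c = part q n (U c) (G c) m"
    using IHc by metis
  define cof where "cof j = (THE c. c < q \<and> j \<in> U c)" for j
  have cof: "cof j = c" if "c < q" "j \<in> U c" for j c
    unfolding cof_def using that disj by (intro the_equality) blast+
  define g where "g j = (if j = r then [] else cof j # G (cof j) j)" for j
  have gU: "g j = c # G c j" if "c < q" "j \<in> U c" for j c
    using that cof U_sub unfolding g_def by auto
  have bij: "bij_betw g J (Nodes q (Suc m))"
    unfolding bij_betw_def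
  proof
    show "inj_on g J"
    proof (rule inj_onI)
      fix j1 j2 assume j: "j1 \<in> J" "j2 \<in> J" "g j1 = g j2"
      show "j1 = j2"
      proof (cases "j1 = r \<or> j2 = r")
        case True
        then show ?thesis using j unfolding g_def by (auto split: if_splits)
      next
        case False
        obtain c1 where c1: "c1 < q" "j1 \<in> U c1" using j(1) False U_cov by blast
        obtain c2 where c2: "c2 < q" "j2 \<in> U c2" using j(2) False U_cov by blast
        have "c1 # G c1 j1 = c2 # G c2 j2" using gU[OF c1] gU[OF c2] j(3) by metis
        then have c12: "c1 = c2" and GG: "G c1 j1 = G c2 j2" by (metis list.inject)+
        have "G c1 j1 = G c1 j2" using GG c12 by metis
        note c12 this
        moreover have "inj_on (G c1) (U c1)" using G c1 bij_betw_def by blast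
        ultimately show ?thesis using c1 c2 by (meson inj_onD)
      qed
    qed
  next
    show "g ` J = Nodes q (Suc m)"
    proof
      show "g ` J \<subseteq> Nodes q (Suc m)"
      proof
        fix u assume "u \<in> g ` J"
        then obtain j where j: "j \<in> J" "u = g j" by auto
        show "u \<in> Nodes q (Suc m)"
        proof (cases "j = r")
          case True
          then show ?thesis using j unfolding g_def Nodes_def by simp
        next
          case False
          obtain c where c: "c < q" "j \<in> U c" using j(1) False U_cov by blast
          have "G c j \<in> Nodes q m" using G c bij_betwE by blast
          then show ?thesis using j gU[OF c] c unfolding Nodes_Suc by auto
        qed
      qed
    next
      show "Nodes q (Suc m) \<subseteq> g ` J"
      proof
        fix u assume "u \<in> Nodes q (Suc m)"
        then consider "u = []" | c v where "u = c#v" "c < q" "v \<in> Nodes q m"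
          unfolding Nodes_Suc by blast
        then show "u \<in> g ` J"
        proof cases
          case 1
          then show ?thesis using r(1) unfolding g_def by force
        next
          case (2 c v)
          have bc: "bij_betw (G c) (U c) (Nodes q m)" using G 2 by blast
          obtain j where j: "j \<in> U c" "G c j = v" using bc 2 by (metis bij_betw_iff_bijections)
          have "j \<in> J" using U_sub j by auto
          moreover have "g j = u" using gU[OF 2(2) j(1)] j 2 by simp
          ultimately show ?thesis by force
        qed
      qed
    qed
  qed
  have patc: "pat n J g (c # w') = (pat n (U c) (G c) w')[r := Some c]" if c: "c < q" for c w'
  proof (rule nth_equalityI)
    show "length (pat n J g (c # w')) = length ((pat n (U c) (G c) w')[r := Some c])" by simp
    fix j assume "j < length (pat n J g (c # w'))"
    then have jn: "j < n" by simp
    show "pat n J g (c # w') ! j = (pat n (U c) (G c) w')[r := Some c] ! j"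
    proof (cases "j = r")
      case True
      then show ?thesis using jn r(1) unfolding g_def by (simp add: nth_pat)
    next
      case False
      show ?thesis
      proof (cases "j \<in> U c")
        case True
        then show ?thesis using False jn gU[OF c True] U_sub by (auto simp: nth_pat)
      next
        case nU: False
        show ?thesis
        proof (cases "j \<in> J")
          case True
          then obtain c' where c': "c' < q" "j \<in> U c'" using False U_cov by blast
          then have "c' \<noteq> c" using nU by auto
          then show ?thesis using gU[OF c'] False nU jn by (auto simp: nth_pat)
        next
          case False
          then show ?thesis using nU jn \<open>j \<noteq> r\<close> by (auto simp: nth_pat)
        qed
      qed
    qed
  qed
  have Peq: "P = part q n J g (Suc m)"
  proof
    show "P \<subseteq> part q n J g (Suc m)"
    proof
      fix p assume p: "p \<in> P"
      then obtain c where pc: "p!r = Some c" using r by auto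
      have c: "c < q" using vals p pc by blast
      have "p[r:=None] \<in> Pc c" using p pc unfolding Pc_def B_def by auto
      then obtain w' where w': "w' \<in> Leaves q m" "p[r:=None] = pat n (U c) (G c) w'"
        using G c unfolding part_def by auto
      have "pat n J g (c # w') = p" using patc[OF c, of w'] w'(2) pc
        by (metis list_update_id list_update_overwrite)
      moreover have "c # w' \<in> Leaves q (Suc m)" using c w'(1) Leaves_Suc by auto
      ultimately show "p \<in> part q n J g (Suc m)" unfolding part_def by force
    qed
  next
    show "part q n J g (Suc m) \<subseteq> P"
    proof
      fix p assume "p \<in> part q n J g (Suc m)"
      then obtain w where w: "w \<in> Leaves q (Suc m)" "p = pat n J g w" unfolding part_def by auto
      then obtain c w' where cw: "w = c # w'" "c < q" "w' \<in> Leaves q m" using Leaves_Suc by auto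
      have "pat n (U c) (G c) w' \<in> Pc c" using G cw unfolding part_def by auto
      then obtain p0 where p0: "p0 \<in> P" "p0!r = Some c" "pat n (U c) (G c) w' = p0[r:=None]"
        unfolding Pc_def B_def by auto
      have "p = (p0[r:=None])[r:=Some c]" using w(2) cw patc p0(3) by simp
      also have "\<dots> = p0" using p0(2) by (metis list_update_id list_update_overwrite)
      finally show "p \<in> P" using p0 by simp
    qed
  qed
  show ?case using cardJ bij Peq unfolding J_def by blast
qed



lemma take_Leaves_Nodes:
  assumes "w \<in> Leaves q m" "k < m"
  shows "take k w \<in> Nodes q m"
  using assms unfolding Leaves_def Nodes_def by (auto dest: in_set_takeD)

lemma first_diff:
  assumes "length w = length w'" "w \<noteq> w'"
  shows "\<exists>k<length w. w!k \<noteq> w'!k \<and> take k w = take k w'"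
proof -
  have ex: "\<exists>k. k < length w \<and> w!k \<noteq> w'!k" using assms nth_equalityI by blast
  obtain k where k: "k < length w \<and> w!k \<noteq> w'!k" "\<forall>i. i < length w \<and> w!i \<noteq> w'!i \<longrightarrow> k \<le> i"
    using ex_has_least_nat[of "\<lambda>k. k < length w \<and> w!k \<noteq> w'!k" _ "\<lambda>k. k"] ex by blast
  have "take k w = take k w'"
  proof (rule nth_equalityI)
    show "length (take k w) = length (take k w')" using assms by simp
    fix i assume "i < length (take k w)"
    then have i: "i < k" "i < length w" by auto
    then have "w!i = w'!i" using k(2) by (meson not_le)
    then show "take k w ! i = take k w' ! i" using i by simp
  qed
  then show ?thesis using k by blast
qed

context
  fixes q n m :: nat and g :: "nat \<Rightarrow> nat list"
  assumes q: "2 \<le> q" and bij: "bij_betw g {..<n} (Nodes q m)"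
begin

lemma g_node: "j < n \<Longrightarrow> g j \<in> Nodes q m"
  using bij bij_betwE by blast

lemma g_inj: "j1 < n \<Longrightarrow> j2 < n \<Longrightarrow> g j1 = g j2 \<Longrightarrow> j1 = j2"
  using bij unfolding bij_betw_def by (auto dest: inj_onD)

lemma g_surj: "u \<in> Nodes q m \<Longrightarrow> \<exists>j<n. g j = u"
proof -
  assume "u \<in> Nodes q m"
  then have "u \<in> g ` {..<n}" using bij unfolding bij_betw_def by simp
  then show ?thesis by auto
qed

lemma pat_diff:
  assumes "w \<in> Leaves q m" "w' \<in> Leaves q m" "w \<noteq> w'"
  shows "\<exists>j<n. \<exists>a b. pat n {..<n} g w ! j = Some a \<and> pat n {..<n} g w' ! j = Some b \<and> a \<noteq> b"
proof -
  have len: "length w = m" "length w' = m" using assms unfolding Leaves_def by auto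
  obtain k where k: "k < m" "w!k \<noteq> w'!k" "take k w = take k w'"
    using first_diff[of w w'] assms len by auto
  obtain j where j: "j < n" "g j = take k w" using g_surj take_Leaves_Nodes[OF assms(1) k(1)] by blast
  have "ppre (g j) w" "ppre (g j) w'" using j k len unfolding ppre_def by auto
  moreover have "length (g j) = k" using j k len by simp
  ultimately show ?thesis using j k by (auto simp: nth_pat)
qed

lemma pat_inj: "inj_on (pat n {..<n} g) (Leaves q m)"
proof (rule inj_onI)
  fix w w' assume "w \<in> Leaves q m" "w' \<in> Leaves q m" "pat n {..<n} g w = pat n {..<n} g w'"
  then show "w = w'" using pat_diff by fastforce
qed

lemma card_Leaves: "card (Leaves q m) = q ^ m"
proof -
  have "Leaves q m = {xs. set xs \<subseteq> {..<q} \<and> length xs = m}" unfolding Leaves_def by auto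
  then show ?thesis using card_lists_length_eq[of "{..<q}" m] by simp
qed

lemma pat_valid: "w \<in> Leaves q m \<Longrightarrow> is_subcube_pat q n (pat n {..<n} g w)"
  unfolding is_subcube_pat_def
proof (intro conjI allI impI)
  fix j v assume w: "w \<in> Leaves q m" and j: "j < n" and v: "pat n {..<n} g w ! j = Some v"
  then have "ppre (g j) w" "v = w ! length (g j)" by (auto simp: nth_pat split: if_splits)
  moreover have "w ! length (g j) \<in> set w" using \<open>ppre (g j) w\<close> unfolding ppre_def by simp
  ultimately show "v < q" using w unfolding Leaves_def by auto
qed simp

lemma pat_dim:
  assumes w: "w \<in> Leaves q m"
  shows "cube_dim (pat n {..<n} g w) + m = n"
proof -
  have lw: "length w = m" using w unfolding Leaves_def by simp
  define F where "F = {j. j < n \<and> ppre (g j) w}"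
  define T where "T = (\<lambda>k. take k w) ` {..<m}"
  have gF: "g ` F = T"
  proof
    show "g ` F \<subseteq> T"
    proof
      fix t assume "t \<in> g ` F"
      then obtain j where j: "j < n" "ppre (g j) w" "t = g j" unfolding F_def by auto
      show "t \<in> T" unfolding T_def
        by (rule image_eqI[where x="length (g j)"]) (use j lw in \<open>auto simp: ppre_def\<close>)
    qed
    show "T \<subseteq> g ` F"
    proof
      fix t assume "t \<in> T"
      then obtain k where k: "k < m" "t = take k w" unfolding T_def by auto
      obtain j where j: "j < n" "g j = t" using g_surj take_Leaves_Nodes[OF w k(1)] k by blast
      have "ppre (g j) w" using j k lw unfolding ppre_def by auto
      then show "t \<in> g ` F" using j unfolding F_def by auto
    qed
  qed
  have "inj_on g F" using g_inj unfolding F_def by (auto intro: inj_onI)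
  then have cF: "card F = card T" using gF card_image by fastforce
  have "inj_on (\<lambda>k. take k w) {..<m}"
  proof (rule inj_onI)
    fix k1 k2 assume k: "k1 \<in> {..<m}" "k2 \<in> {..<m}" "take k1 w = take k2 w"
    then have "length (take k1 w) = length (take k2 w)" by simp
    moreover have "length (take k1 w) = k1" "length (take k2 w) = k2" using k(1,2) lw by auto
    ultimately show "k1 = k2" by simp
  qed
  then have cT: "card T = m" unfolding T_def by (simp add: card_image)
  have "{i. i < length (pat n {..<n} g w) \<and> pat n {..<n} g w ! i = None} = {..<n} - F"
    unfolding F_def by (auto simp: nth_pat)
  moreover have "card ({..<n} - F) = n - card F"
    by (subst card_Diff_subset) (auto simp: F_def)
  ultimately have "cube_dim (pat n {..<n} g w) = n - m"
    unfolding cube_dim_def using cF cT by simp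
  moreover have "card F \<le> card {..<n}" using card_mono[of "{..<n}" F] F_def by auto
  then have "m \<le> n" using cF cT by simp
  ultimately show ?thesis by simp
qed

fun walk :: "nat list \<Rightarrow> nat \<Rightarrow> nat list" where
  "walk x 0 = []"
| "walk x (Suc k) = walk x k @ [x ! (inv_into {..<n} g (walk x k))]"

lemma walk_len: "length (walk x k) = k"
  by (induction k) auto

lemma walk_take: "k \<le> K \<Longrightarrow> take k (walk x K) = walk x k"
proof (induction K)
  case 0 then show ?case by simp
next
  case (Suc K)
  then show ?case
  proof (cases "k = Suc K")
    case True then show ?thesis using walk_len[of x "Suc K"] by simp
  next
    case False
    then have "k \<le> K" using Suc by simp
    then show ?thesis using Suc walk_len by simp
  qed
qed

lemma walk_nodes:
  assumes x: "x \<in> Zq_vecs q n"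
  shows "k \<le> m \<Longrightarrow> set (walk x k) \<subseteq> {..<q}"
proof (induction k)
  case 0 then show ?case by simp
next
  case (Suc k)
  then have "walk x k \<in> Nodes q m" unfolding Nodes_def using walk_len by simp
  then have "inv_into {..<n} g (walk x k) \<in> {..<n}"
    using bij_betw_inv_into[OF bij] bij_betwE by blast
  then have "inv_into {..<n} g (walk x k) < n" by simp
  then have "x ! (inv_into {..<n} g (walk x k)) < q" using x unfolding mem_Zq by auto
  then show ?case using Suc by simp
qed

lemma walk_cover:
  assumes x: "x \<in> Zq_vecs q n"
  shows "walk x m \<in> Leaves q m \<and> x \<in> cube_set q (pat n {..<n} g (walk x m))"
proof
  show wl: "walk x m \<in> Leaves q m" using walk_len walk_nodes[OF x] unfolding Leaves_def by simp
  show "x \<in> cube_set q (pat n {..<n} g (walk x m))"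
    unfolding mem_cube
  proof (intro conjI allI impI)
    show "length x = length (pat n {..<n} g (walk x m))" using x unfolding mem_Zq by simp
    fix j assume "j < length (pat n {..<n} g (walk x m))"
    then have j: "j < n" by simp
    show "x!j < q" using x j unfolding mem_Zq by simp
    fix v assume v: "pat n {..<n} g (walk x m) ! j = Some v"
    then have pp: "ppre (g j) (walk x m)" and vv: "v = walk x m ! length (g j)"
      using j by (auto simp: nth_pat split: if_splits)
    define k where "k = length (g j)"
    have km: "k < m" using pp walk_len unfolding ppre_def k_def by simp
    have gj: "g j = walk x k" using pp walk_take[of k m x] km unfolding ppre_def k_def by simp
    have "inv_into {..<n} g (g j) = j"
      using bij_betw_inv_into_left[OF bij] j by simp
    then have inv: "inv_into {..<n} g (walk x k) = j" using gj by simp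
    have "walk x (Suc k) ! k = take (Suc k) (walk x m) ! k"
      using walk_take[of "Suc k" m x] km by simp
    then have "walk x m ! k = walk x (Suc k) ! k" by simp
    also have "\<dots> = x ! j" using inv walk_len by (simp add: nth_append)
    finally show "x ! j = v" using vv k_def by simp
  qed
qed

lemma part_is_aprim: "aprim_partition q n m (part q n {..<n} g m)"
  unfolding aprim_partition_def
proof (intro conjI ballI allI impI)
  fix p assume "p \<in> part q n {..<n} g m"
  then obtain w where w: "w \<in> Leaves q m" "p = pat n {..<n} g w" unfolding part_def by auto
  show "is_subcube_pat q n p" using pat_valid w by simp
  show "cube_dim p + m = n" using pat_dim w by simp
next
  show "card (part q n {..<n} g m) = q ^ m"
    unfolding part_def using pat_inj card_Leaves by (simp add: card_image)
next
  fix x assume x: "x \<in> Zq_vecs q n"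
  show "\<exists>!p. p \<in> part q n {..<n} g m \<and> x \<in> cube_set q p"
  proof (rule ex1I)
    show "pat n {..<n} g (walk x m) \<in> part q n {..<n} g m \<and> x \<in> cube_set q (pat n {..<n} g (walk x m))"
      using walk_cover[OF x] unfolding part_def by auto
  next
    fix p assume p: "p \<in> part q n {..<n} g m \<and> x \<in> cube_set q p"
    then obtain w where w: "w \<in> Leaves q m" "p = pat n {..<n} g w" unfolding part_def by auto
    show "p = pat n {..<n} g (walk x m)"
    proof (rule ccontr)
      assume ne: "p \<noteq> pat n {..<n} g (walk x m)"
      then have "w \<noteq> walk x m" using w by auto
      then obtain j a b where j: "j < n" "pat n {..<n} g w ! j = Some a"
        "pat n {..<n} g (walk x m) ! j = Some b" "a \<noteq> b"
        using pat_diff[OF w(1)] walk_cover[OF x] by blast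
      have "x!j = a" using p w j unfolding mem_cube by auto
      moreover have "x!j = b" using walk_cover[OF x] j unfolding mem_cube by auto
      ultimately show False using j by simp
    qed
  qed
next
  fix i assume i: "i < n"
  define u where "u = g i"
  have u: "u \<in> Nodes q m" using g_node i u_def by simp
  define w where "w = u @ replicate (m - length u) 0"
  have wl: "w \<in> Leaves q m" using u q unfolding w_def Leaves_def Nodes_def by auto
  have "ppre u w" using u unfolding w_def ppre_def Nodes_def by simp
  then have "pat n {..<n} g w ! i \<noteq> None" using i u_def by (simp add: nth_pat)
  then show "\<exists>p\<in>part q n {..<n} g m. p ! i \<noteq> None" using wl unfolding part_def by blast
qed

end



definition pfx :: "nat list \<Rightarrow> nat list \<Rightarrow> bool" where
  "pfx u v \<longleftrightarrow> length u \<le> length v \<and> take (length u) v = u"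

lemma card_takes: "card ((\<lambda>k. take k u) ` {..<length u}) = length u"
proof -
  have "inj_on (\<lambda>k. take k u) {..<length u}"
  proof (rule inj_onI)
    fix k1 k2 assume k: "k1 \<in> {..<length u}" "k2 \<in> {..<length u}" "take k1 u = take k2 u"
    then have "length (take k1 u) = length (take k2 u)" by simp
    moreover have "length (take k1 u) = k1" "length (take k2 u) = k2" using k(1,2) by auto
    ultimately show "k1 = k2" by simp
  qed
  then show ?thesis by (simp add: card_image)
qed

lemma pfx_lt: "pfx u v \<Longrightarrow> u \<noteq> v \<Longrightarrow> length u < length v"
proof -
  assume p: "pfx u v" and ne: "u \<noteq> v"
  have "length u \<noteq> length v"
  proof
    assume eqL: "length u = length v"
    have "u = take (length u) v" using p unfolding pfx_def by simp
    also have "\<dots> = v" using eqL by simp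
    finally show False using ne by simp
  qed
  then show ?thesis using p unfolding pfx_def by simp
qed

context
  fixes q n m :: nat and g :: "nat \<Rightarrow> nat list"
  assumes q: "2 \<le> q" and bij: "bij_betw g {..<n} (Nodes q m)"
begin

lemma S_char:
  assumes j: "j < n" and j': "j' < n"
  shows "(\<forall>w\<in>Leaves q m. ppre (g j) w \<longrightarrow> ppre (g j') w) \<longleftrightarrow> pfx (g j') (g j)"
proof
  assume H: "\<forall>w\<in>Leaves q m. ppre (g j) w \<longrightarrow> ppre (g j') w"
  show "pfx (g j') (g j)"
  proof (rule ccontr)
    assume np: "\<not> pfx (g j') (g j)"
    define L where "L = length (g j)"
    define c where "c = (if L < length (g j') \<and> g j' ! L = 0 then 1 else (0::nat))"
    define w where "w = g j @ [c] @ replicate (m - L - 1) 0"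
    have gj: "g j \<in> Nodes q m" using g_node[OF q bij j] .
    have Lm: "L < m" using gj unfolding Nodes_def L_def by simp
    have cq: "c < q" using q unfolding c_def by auto
    have wl: "w \<in> Leaves q m" using gj Lm cq unfolding w_def Leaves_def Nodes_def L_def by auto
    have pw: "ppre (g j) w" using Lm unfolding ppre_def w_def L_def by simp
    have "ppre (g j') w" using H wl pw by blast
    then have t: "take (length (g j')) w = g j'" and l': "length (g j') < length w"
      unfolding ppre_def by auto
    show False
    proof (cases "length (g j') \<le> L")
      case True
      then have "take (length (g j')) w = take (length (g j')) (g j)" unfolding w_def L_def by simp
      then have "pfx (g j') (g j)" using t True unfolding pfx_def L_def by simp
      then show False using np by simp
    next
      case False
      then have "g j' ! L = take (length (g j')) w ! L" using t by simp
      also have "\<dots> = w ! L" using False by simp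
      also have "\<dots> = c" unfolding w_def L_def by simp
      finally show False using False unfolding c_def by (auto split: if_splits)
    qed
  qed
next
  assume p: "pfx (g j') (g j)"
  show "\<forall>w\<in>Leaves q m. ppre (g j) w \<longrightarrow> ppre (g j') w"
  proof (intro ballI impI)
    fix w assume "w \<in> Leaves q m" "ppre (g j) w"
    then have a: "length (g j) < length w" "take (length (g j)) w = g j" unfolding ppre_def by auto
    have "take (length (g j')) w = take (length (g j')) (take (length (g j)) w)"
      using p unfolding pfx_def by (simp add: min.absorb1)
    also have "\<dots> = g j'" using a p unfolding pfx_def by simp
    finally show "ppre (g j') w" using a p unfolding ppre_def pfx_def by simp
  qed
qed

lemma Sub_char:
  assumes j: "j < n" and j': "j' < n"
  shows "({p\<in>part q n {..<n} g m. p!j \<noteq> None} \<subseteq> {p\<in>part q n {..<n} g m. p!j' \<noteq> None})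
    \<longleftrightarrow> pfx (g j') (g j)"
proof -
  have nn: "pat n {..<n} g w ! k \<noteq> None \<longleftrightarrow> ppre (g k) w" if "k < n" for k w
    using that by (simp add: nth_pat)
  have "({p\<in>part q n {..<n} g m. p!j \<noteq> None} \<subseteq> {p\<in>part q n {..<n} g m. p!j' \<noteq> None})
     \<longleftrightarrow> (\<forall>w\<in>Leaves q m. ppre (g j) w \<longrightarrow> ppre (g j') w)"
  proof
    assume sub: "{p\<in>part q n {..<n} g m. p!j \<noteq> None} \<subseteq> {p\<in>part q n {..<n} g m. p!j' \<noteq> None}"
    show "\<forall>w\<in>Leaves q m. ppre (g j) w \<longrightarrow> ppre (g j') w"
    proof (intro ballI impI)
      fix w assume w: "w \<in> Leaves q m" "ppre (g j) w"
      have "pat n {..<n} g w \<in> {p\<in>part q n {..<n} g m. p!j \<noteq> None}"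
        using w nn[OF j] unfolding part_def by simp
      then have "pat n {..<n} g w ! j' \<noteq> None" using sub by blast
      then show "ppre (g j') w" using nn[OF j'] by simp
    qed
  next
    assume H: "\<forall>w\<in>Leaves q m. ppre (g j) w \<longrightarrow> ppre (g j') w"
    show "{p\<in>part q n {..<n} g m. p!j \<noteq> None} \<subseteq> {p\<in>part q n {..<n} g m. p!j' \<noteq> None}"
    proof
      fix p assume p: "p \<in> {p\<in>part q n {..<n} g m. p!j \<noteq> None}"
      then obtain w where w: "w \<in> Leaves q m" "p = pat n {..<n} g w" unfolding part_def by auto
      have "ppre (g j) w" using p w nn[OF j] by simp
      then have "ppre (g j') w" using H w by blast
      then show "p \<in> {p\<in>part q n {..<n} g m. p!j' \<noteq> None}" using p w nn[OF j'] by simp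
    qed
  qed
  then show ?thesis using S_char[OF j j'] by simp
qed

lemma len_char:
  assumes j: "j < n"
  shows "length (g j) = card {j'. j' < n \<and> pfx (g j') (g j) \<and> j' \<noteq> j}"
proof -
  define X where "X = {j'. j' < n \<and> pfx (g j') (g j) \<and> j' \<noteq> j}"
  have gX: "g ` X = (\<lambda>k. take k (g j)) ` {..<length (g j)}"
  proof
    show "g ` X \<subseteq> (\<lambda>k. take k (g j)) ` {..<length (g j)}"
    proof
      fix t assume "t \<in> g ` X"
      then obtain j' where j': "j' < n" "pfx (g j') (g j)" "j' \<noteq> j" "t = g j'" unfolding X_def by auto
      have "g j' \<noteq> g j" using g_inj[OF q bij j'(1) j] j' by blast
      then have "length (g j') < length (g j)" using pfx_lt j'(2) by blast
      then show "t \<in> (\<lambda>k. take k (g j)) ` {..<length (g j)}"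
        using j' unfolding pfx_def by (intro image_eqI[where x="length (g j')"]) auto
    qed
  next
    show "(\<lambda>k. take k (g j)) ` {..<length (g j)} \<subseteq> g ` X"
    proof
      fix t assume "t \<in> (\<lambda>k. take k (g j)) ` {..<length (g j)}"
      then obtain k where k: "k < length (g j)" "t = take k (g j)" by auto
      have gj: "g j \<in> Nodes q m" using g_node[OF q bij j] .
      have "t \<in> Nodes q m" using gj k unfolding Nodes_def by (auto dest: in_set_takeD)
      then obtain j' where j': "j' < n" "g j' = t" using g_surj[OF q bij] by blast
      have "pfx (g j') (g j)" using j' k unfolding pfx_def by simp
      moreover have "length (g j') = k" using j' k by simp
      then have "j' \<noteq> j" using k by auto
      ultimately show "t \<in> g ` X" using j' unfolding X_def by auto
    qed
  qed
  have "inj_on g X" using g_inj[OF q bij] unfolding X_def by (auto intro: inj_onI)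
  then have "card X = card (g ` X)" by (simp add: card_image)
  also have "\<dots> = card ((\<lambda>k. take k (g j)) ` {..<length (g j)})" using gX by simp
  also have "\<dots> = length (g j)" by (rule card_takes)
  finally show ?thesis unfolding X_def by simp
qed

lemma val_char:
  assumes j: "j < n" and j': "j' < n" and p: "pfx (g j') (g j)" and ne: "j' \<noteq> j"
    and w: "w \<in> Leaves q m" "ppre (g j) w"
  shows "pat n {..<n} g w ! j' = Some (g j ! length (g j'))"
proof -
  have pj': "ppre (g j') w" using S_char[OF j j'] p w by blast
  have "g j' \<noteq> g j" using g_inj[OF q bij j' j] ne by blast
  then have lt: "length (g j') < length (g j)" using pfx_lt p by blast
  have "w ! length (g j') = take (length (g j)) w ! length (g j')" using lt by simp
  also have "\<dots> = g j ! length (g j')" using w unfolding ppre_def by simp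
  finally show ?thesis using j' pj' by (simp add: nth_pat)
qed

end

lemma part_inj:
  assumes q: "2 \<le> q" and b1: "bij_betw g {..<n} (Nodes q m)" and b2: "bij_betw g' {..<n} (Nodes q m)"
    and eq: "part q n {..<n} g m = part q n {..<n} g' m" and j: "j < n"
  shows "g j = g' j"
proof -
  have pf: "pfx (g j2) (g j1) \<longleftrightarrow> pfx (g' j2) (g' j1)" if "j1 < n" "j2 < n" for j1 j2
    using Sub_char[OF q b1 that] Sub_char[OF q b2 that] eq by simp
  have len: "length (g j1) = length (g' j1)" if "j1 < n" for j1
  proof -
    have "{j'. j' < n \<and> pfx (g j') (g j1) \<and> j' \<noteq> j1} = {j'. j' < n \<and> pfx (g' j') (g' j1) \<and> j' \<noteq> j1}"
      using pf that by blast
    then show ?thesis using len_char[OF q b1 that] len_char[OF q b2 that] by simp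
  qed
  show ?thesis
  proof (rule nth_equalityI)
    show "length (g j) = length (g' j)" using len j by simp
    fix k assume k: "k < length (g j)"
    have gj: "g j \<in> Nodes q m" using g_node[OF q b1 j] .
    have "take k (g j) \<in> Nodes q m" using gj k unfolding Nodes_def by (auto dest: in_set_takeD)
    then obtain j' where j': "j' < n" "g j' = take k (g j)" using g_surj[OF q b1] by blast
    have p1: "pfx (g j') (g j)" using j' k unfolding pfx_def by simp
    have lk: "length (g j') = k" using j' k by simp
    have ne: "j' \<noteq> j" using lk k by auto
    have p2: "pfx (g' j') (g' j)" using pf[OF j j'(1)] p1 by simp
    have lk': "length (g' j') = k" using len[OF j'(1)] lk by simp
    define w where "w = g j @ replicate (m - length (g j)) 0"
    have wl: "w \<in> Leaves q m" using gj q unfolding w_def Leaves_def Nodes_def by auto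
    have pw: "ppre (g j) w" using gj unfolding w_def ppre_def Nodes_def by simp
    have v1: "pat n {..<n} g w ! j' = Some (g j ! k)" using val_char[OF q b1 j j'(1) p1 ne wl pw] lk by simp
    have "pat n {..<n} g w \<in> part q n {..<n} g' m" using eq wl unfolding part_def by auto
    then obtain w' where w': "w' \<in> Leaves q m" "pat n {..<n} g w = pat n {..<n} g' w'"
      unfolding part_def by auto
    have "pat n {..<n} g w ! j \<noteq> None" using pw j by (simp add: nth_pat)
    then have pw': "ppre (g' j) w'" using w' j by (simp add: nth_pat split: if_splits)
    have v2: "pat n {..<n} g' w' ! j' = Some (g' j ! k)" using val_char[OF q b2 j j'(1) p2 ne w'(1) pw'] lk' by simp
    show "g j ! k = g' j ! k" using v1 v2 w'(2) by simp
  qed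
qed



lemma nn_eq: "1 \<le> q \<Longrightarrow> (q-1) * nn q m + 1 = q ^ m"
proof (induction m)
  case 0 then show ?case by simp
next
  case (Suc m)
  obtain r where r: "q = Suc r" using Suc.prems by (cases q) auto
  have IH: "r * nn q m + 1 = Suc r ^ m" using Suc.IH Suc.prems r by simp
  have "(q-1) * nn q (Suc m) + 1 = r * (1 + Suc r * nn q m) + 1" using r by simp
  also have "\<dots> = Suc r * (r * nn q m + 1)" by (simp add: algebra_simps)
  also have "\<dots> = q ^ Suc m" using IH r by simp
  finally show ?case .
qed

lemma finite_Nodes: "finite (Nodes q m)"
proof -
  have "Nodes q m \<subseteq> {xs. set xs \<subseteq> {..<q} \<and> length xs \<le> m}" unfolding Nodes_def by auto
  moreover have "finite {xs. set xs \<subseteq> {..<q} \<and> length xs \<le> m}"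
    by (rule finite_lists_length_le) simp
  ultimately show ?thesis by (rule finite_subset)
qed

lemma card_Nodes: "1 \<le> q \<Longrightarrow> card (Nodes q m) = nn q m"
proof (induction m)
  case 0 then show ?case unfolding Nodes_def by simp
next
  case (Suc m)
  have U: "Nodes q (Suc m) = Nodes q m \<union> {xs. set xs \<subseteq> {..<q} \<and> length xs = m}"
    unfolding Nodes_def by auto
  have D: "Nodes q m \<inter> {xs. set xs \<subseteq> {..<q} \<and> length xs = m} = {}"
    unfolding Nodes_def by auto
  have fin2: "finite {xs. set xs \<subseteq> {..<q} \<and> length xs = m}"
    by (rule finite_lists_length_eq) simp
  have "card (Nodes q (Suc m)) = card (Nodes q m) + card {xs. set xs \<subseteq> {..<q} \<and> length xs = m}"
    unfolding U using D finite_Nodes fin2 by (simp add: card_Un_disjoint)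
  also have "\<dots> = nn q m + q ^ m" using Suc card_lists_length_eq[of "{..<q}" m] by simp
  also have "\<dots> = nn q (Suc m)"
  proof -
    obtain r where r: "q = Suc r" using Suc.prems by (cases q) auto
    have "r * nn q m + 1 = q ^ m" using nn_eq[OF Suc.prems, of m] r by simp
    then have "nn q m + q ^ m = nn q m + r * nn q m + 1" by simp
    also have "\<dots> = 1 + q * nn q m" using r by simp
    finally show ?thesis by simp
  qed
  finally show ?case .
qed

lemma pat_cong: "(\<forall>j\<in>J. g j = g' j) \<Longrightarrow> pat n J g w = pat n J g' w"
  by (rule nth_equalityI) (auto simp: nth_pat)

lemma part_cong: "(\<forall>j\<in>J. g j = g' j) \<Longrightarrow> part q n J g m = part q n J g' m"
  unfolding part_def using pat_cong by (metis (no_types, lifting) image_cong)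

lemma aprim_ispart: "aprim_partition q n m P \<Longrightarrow> ispart q n P"
  unfolding aprim_partition_def ispart_def by blast

lemma aprim_used: "aprim_partition q n m P \<Longrightarrow> used n P = {..<n}"
  unfolding aprim_partition_def used_def by auto

lemma aprim_bound:
  assumes q: "2 \<le> q" and P: "aprim_partition q n m P"
  shows "n \<le> nn q m"
proof -
  have "1 + (q-1) * card (used n P) \<le> card P" using LT[OF q aprim_ispart[OF P]] by simp
  then have "1 + (q-1) * n \<le> q ^ m" using aprim_used[OF P] P unfolding aprim_partition_def by simp
  moreover have "(q-1) * nn q m + 1 = q ^ m" using nn_eq[of q m] q by simp
  ultimately have "(q-1) * n \<le> (q-1) * nn q m" by linarith
  then show ?thesis using q by simp
qed

theorem main:
  fixes q m :: nat
  assumes q: "2 \<le> q"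
  shows "N_coord q m = nn q m \<and> c_coord_star q (nn q m) m = fact (nn q m)"
proof -
  define N where "N = nn q m"
  have cN: "card (Nodes q m) = N" using card_Nodes q unfolding N_def by simp
  obtain g0 where g0: "bij_betw g0 {..<N} (Nodes q m)"
    using bij_betw_iff_card[of "{..<N}" "Nodes q m"] finite_Nodes cN by auto
  have ex: "aprim_partition q N m (part q N {..<N} g0 m)" using part_is_aprim[OF q g0] .
  have Nc: "N_coord q m = N"
    unfolding N_coord_def
  proof (rule Least_equality)
    show "\<forall>n>N. \<not> (\<exists>P. aprim_partition q n m P)" using aprim_bound[OF q] N_def by fastforce
  next
    fix y assume y: "\<forall>n>y. \<not> (\<exists>P. aprim_partition q n m P)"
    show "N \<le> y"
    proof (rule ccontr)
      assume "\<not> N \<le> y"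
      then show False using y ex by auto
    qed
  qed
  define Perms where "Perms = {\<sigma>. \<sigma> permutes {..<N}}"
  define F where "F \<sigma> = part q N {..<N} (g0 \<circ> \<sigma>) m" for \<sigma>
  have bijs: "bij_betw (g0 \<circ> \<sigma>) {..<N} (Nodes q m)" if "\<sigma> \<in> Perms" for \<sigma>
    using that permutes_imp_bij g0 bij_betw_trans unfolding Perms_def by blast
  have seteq: "{P. aprim_partition q N m P} = F ` Perms"
  proof
    show "F ` Perms \<subseteq> {P. aprim_partition q N m P}"
      using part_is_aprim[OF q bijs] unfolding F_def by auto
  next
    show "{P. aprim_partition q N m P} \<subseteq> F ` Perms"
    proof
      fix P assume "P \<in> {P. aprim_partition q N m P}"
      then have P: "aprim_partition q N m P" by simp
      have uP: "used N P = {..<N}" using aprim_used[OF P] .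
      have cP: "card P = 1 + (q-1) * card (used N P)"
        using P uP nn_eq[of q m] q unfolding aprim_partition_def N_def by simp
      have dims: "\<forall>p\<in>P. cube_dim p + m = N" using P unfolding aprim_partition_def by simp
      obtain g where g: "bij_betw g {..<N} (Nodes q m)" "P = part q N {..<N} g m"
        using struct[OF q aprim_ispart[OF P] dims cP] uP by auto
      define \<sigma> where "\<sigma> j = (if j < N then inv_into {..<N} g0 (g j) else j)" for j
      have bs: "bij_betw (inv_into {..<N} g0 \<circ> g) {..<N} {..<N}"
        using bij_betw_trans[OF g(1) bij_betw_inv_into[OF g0]] .
      have "bij_betw \<sigma> {..<N} {..<N}"
        using bs by (rule bij_betw_cong[THEN iffD1, rotated]) (simp add: \<sigma>_def)
      then have "\<sigma> permutes {..<N}"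
        by (rule bij_imp_permutes) (auto simp: \<sigma>_def)
      then have sp: "\<sigma> \<in> Perms" unfolding Perms_def by simp
      have "\<forall>j\<in>{..<N}. (g0 \<circ> \<sigma>) j = g j"
      proof
        fix j assume j: "j \<in> {..<N}"
        have "g j \<in> g0 ` {..<N}" using g(1) g0 j unfolding bij_betw_def by auto
        then show "(g0 \<circ> \<sigma>) j = g j" using j unfolding \<sigma>_def by (simp add: f_inv_into_f)
      qed
      then have "F \<sigma> = P" unfolding F_def g(2) by (rule part_cong)
      then show "P \<in> F ` Perms" using sp by blast
    qed
  qed
  have inj: "inj_on F Perms"
  proof (rule inj_onI)
    fix s1 s2 assume s: "s1 \<in> Perms" "s2 \<in> Perms" "F s1 = F s2"
    show "s1 = s2"
    proof
      fix j
      show "s1 j = s2 j"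
      proof (cases "j < N")
        case True
        have "(g0 \<circ> s1) j = (g0 \<circ> s2) j"
          using part_inj[OF q bijs[OF s(1)] bijs[OF s(2)] _ True] s(3) unfolding F_def by simp
        moreover have "s1 permutes {..<N}" "s2 permutes {..<N}" using s unfolding Perms_def by auto
        then have "s1 j \<in> {..<N}" "s2 j \<in> {..<N}"
          using permutes_in_image True by fastforce+
        ultimately show ?thesis using g0 unfolding bij_betw_def by (auto dest: inj_onD)
      next
        case False
        then show ?thesis using s unfolding Perms_def by (simp add: permutes_not_in)
      qed
    qed
  qed
  have "c_coord_star q N m = card (F ` Perms)" unfolding c_coord_star_def seteq ..
  also have "\<dots> = card Perms" using inj by (simp add: card_image)
  also have "\<dots> = fact N" unfolding Perms_def by (rule card_permutations) simp_all
  finally show ?thesis using Nc N_def by simp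
qed

theorem theorem7:
  fixes q m :: nat
  assumes "q \<ge> 2" and "m \<ge> 1"
  shows "N_coord q m = (q ^ m - 1) div (q - 1) \<and>
         c_coord_star q ((q ^ m - 1) div (q - 1)) m = fact ((q ^ m - 1) div (q - 1))"
proof -
  have "(q-1) * nn q m + 1 = q ^ m" using nn_eq assms(1) by simp
  then have "q ^ m - 1 = (q-1) * nn q m" by simp
  then have "(q ^ m - 1) div (q - 1) = nn q m" using assms(1) by simp
  then show ?thesis using main[OF assms(1)] by simp
qed

end
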